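(* Let $X$ be a locally path connected space and let $A\subseteq X$ be a closed, path connected subset such that every point of $A$ has a countable local base in $X$. Let $p:X\to X/A$ be the quotient map and $*=p(A)$. Then for every $a\in A$, $\overline{p_*\pi_1^{top}(X,a)}=\pi_1^{top}(X/A,* )$.
   Context: For $A\subseteq X$, $X/A$ denotes the quotient space obtained by collapsing $A$ to a single point $*$, with quotient map $p$. For a pointed space $(X,x)$, the topological fundamental group $\pi_1^{top}(X,x)$ is $\pi_1(X,x)$ with the quotient topology with respect to the canonical surjection from the loop space $\Omega(X,x)$ (based loops $[0,1]\to X$ with the compact-open topology) onto $\pi_1(X,x)$; $p_*$ is the induced continuous homomorphism. *)

theory Defs
  imports "HOL-Analysis.Analysis"
begin

definition quotient_topology :: "'a topology \<Rightarrow> ('a \<Rightarrow> 'b) \<Rightarrow> 'b topology" where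
  "quotient_topology X f =
     topology (\<lambda>U. U \<subseteq> f ` topspace X \<and> openin X {x \<in> topspace X. f x \<in> U})"

(* The quotient map X \<rightarrow> X/A collapsing A to the single point A (the point * ) *)
definition collapse_map :: "'a set \<Rightarrow> 'a \<Rightarrow> 'a set" where
  "collapse_map A x = (if x \<in> A then A else {x})"

definition collapse_space :: "'a topology \<Rightarrow> 'a set \<Rightarrow> 'a set topology" where
  "collapse_space X A = quotient_topology X (collapse_map A)"

definition countable_local_base_at :: "'a topology \<Rightarrow> 'a \<Rightarrow> bool" where
  "countable_local_base_at X a \<longleftrightarrow>
     (\<exists>\<B>. countable \<B> \<and> (\<forall>V\<in>\<B>. openin X V \<and> a \<in> V) \<and>
          (\<forall>U. openin X U \<and> a \<in> U \<longrightarrow> (\<exists>V\<in>\<B>. V \<subseteq> U)))"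

definition loops :: "'a topology \<Rightarrow> 'a \<Rightarrow> (real \<Rightarrow> 'a) set" where
  "loops X x = {g. pathin X g \<and> g 0 = x \<and> g 1 = x}"

definition loop_space_top :: "'a topology \<Rightarrow> 'a \<Rightarrow> (real \<Rightarrow> 'a) topology" where
  "loop_space_top X x = topology_generated_by
     {{g \<in> loops X x. g ` K \<subseteq> U} | K U. compactin (top_of_set {0..1}) K \<and> openin X U}"

definition path_homotopic :: "'a topology \<Rightarrow> (real \<Rightarrow> 'a) \<Rightarrow> (real \<Rightarrow> 'a) \<Rightarrow> bool" where
  "path_homotopic X g h \<longleftrightarrow>
     homotopic_with (\<lambda>k. k 0 = g 0 \<and> k 1 = g 1) (top_of_set {0..1}) X g h"

definition loop_class :: "'a topology \<Rightarrow> 'a \<Rightarrow> (real \<Rightarrow> 'a) \<Rightarrow> (real \<Rightarrow> 'a) set" where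
  "loop_class X x g = {h \<in> loops X x. path_homotopic X g h}"

definition pi1_top :: "'a topology \<Rightarrow> 'a \<Rightarrow> (real \<Rightarrow> 'a) set topology" where
  "pi1_top X x = quotient_topology (loop_space_top X x) (loop_class X x)"

end

theory Submission imports Defs begin

lemma openin_quotient_topology:
  "openin (quotient_topology X f) U \<longleftrightarrow> U \<subseteq> f ` topspace X \<and> openin X {x \<in> topspace X. f x \<in> U}"
proof -
  have "istopology (\<lambda>U. U \<subseteq> f ` topspace X \<and> openin X {x \<in> topspace X. f x \<in> U})"
    unfolding istopology_def
  proof (intro conjI allI impI)
    fix S T assume S: "S \<subseteq> f ` topspace X \<and> openin X {x \<in> topspace X. f x \<in> S}"
       and T: "T \<subseteq> f ` topspace X \<and> openin X {x \<in> topspace X. f x \<in> T}"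
    show "S \<inter> T \<subseteq> f ` topspace X" using S by blast
    have "{x \<in> topspace X. f x \<in> S \<inter> T} = {x \<in> topspace X. f x \<in> S} \<inter> {x \<in> topspace X. f x \<in> T}" by blast
    then show "openin X {x \<in> topspace X. f x \<in> S \<inter> T}" using S T by (simp add: openin_Int)
  next
    fix K assume K: "\<forall>S\<in>K. S \<subseteq> f ` topspace X \<and> openin X {x \<in> topspace X. f x \<in> S}"
    show "\<Union>K \<subseteq> f ` topspace X" using K by blast
    have "{x \<in> topspace X. f x \<in> \<Union>K} = (\<Union>S\<in>K. {x \<in> topspace X. f x \<in> S})" by auto
    then show "openin X {x \<in> topspace X. f x \<in> \<Union>K}"
      using K by auto
  qed
  then show ?thesis unfolding quotient_topology_def by simp
qed

lemma topspace_quotient_topology: "topspace (quotient_topology X f) = f ` topspace X"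
proof -
  have "openin (quotient_topology X f) (f ` topspace X)"
  proof -
    have "{x \<in> topspace X. f x \<in> f ` topspace X} = topspace X" by blast
    then show ?thesis unfolding openin_quotient_topology by simp
  qed
  moreover have "\<And>U. openin (quotient_topology X f) U \<Longrightarrow> U \<subseteq> f ` topspace X"
    unfolding openin_quotient_topology by auto
  ultimately show ?thesis unfolding topspace_def by blast
qed

lemma continuous_map_quotient: "continuous_map X (quotient_topology X f) f"
  unfolding continuous_map_def topspace_quotient_topology openin_quotient_topology by auto

lemma collapse_eq:
  "collapse_map A x = collapse_map A y \<longleftrightarrow> x = y \<or> (x \<in> A \<and> y \<in> A)"
  unfolding collapse_map_def by auto

lemma comp_path:
  assumes lpc: "locally_path_connected_space X" and pcA: "path_connectedin X A"
    and V: "openin (collapse_space X A) V" and h: "pathin (collapse_space X A) h"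
    and hV: "h ` {0..1} \<subseteq> V"
    and x0: "x0 \<in> topspace X" and x1: "x1 \<in> topspace X"
    and h0: "collapse_map A x0 = h 0" and h1: "collapse_map A x1 = h 1"
  shows "\<exists>g. pathin X g \<and> g 0 = x0 \<and> g 1 = x1 \<and> (\<forall>t\<in>{0..1}. collapse_map A (g t) \<in> V)"
proof -
  let ?p = "collapse_map A"
  let ?Y = "collapse_space X A"
  define Ow where "Ow = {x \<in> topspace X. ?p x \<in> V}"
  have AX: "A \<subseteq> topspace X" using pcA path_connectedin_subset_topspace by blast
  have Vo: "V \<subseteq> ?p ` topspace X" and oO: "openin X Ow"
    using V unfolding Ow_def collapse_space_def openin_quotient_topology by auto
  have "h 0 \<in> V" "h 1 \<in> V" using hV by auto
  then have x0O: "x0 \<in> Ow" and x1O: "x1 \<in> Ow" using x0 x1 h0 h1 unfolding Ow_def by auto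
  define PC where "PC = path_component_of (subtopology X Ow)"
  define D where "D = Collect (PC x0)"
  have Asub: "PC w z" if "z \<in> A" "w \<in> A" "w \<in> Ow" for z w
  proof -
    have "A \<subseteq> Ow"
    proof
      fix u assume "u \<in> A"
      then have "?p u = ?p w" using that collapse_eq by metis
      then show "u \<in> Ow" using \<open>u \<in> A\<close> AX that(3) unfolding Ow_def by auto
    qed
    then have "path_connectedin (subtopology X Ow) A" using pcA path_connectedin_subtopology by blast
    then show ?thesis unfolding PC_def path_component_of using that by blast
  qed
  have sat: "v \<in> D" if "u \<in> D" "v \<in> topspace X" "?p v = ?p u" for u v
  proof (cases "v = u")
    case True then show ?thesis using that by simp
  next
    case False
    then have "u \<in> A" "v \<in> A" using that(3) collapse_eq by metis+
    moreover have "u \<in> Ow" using that(1) path_component_of_subset_topspace unfolding D_def PC_def by fastforce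
    ultimately have "PC u v" using Asub by blast
    then show ?thesis using that(1) unfolding D_def PC_def by (metis mem_Collect_eq path_component_of_trans)
  qed
  have lpcO: "locally_path_connected_space (subtopology X Ow)"
    using lpc oO locally_path_connected_space_open_subset by blast
  have oPC: "openin X (Collect (PC y))" for y
    using openin_path_component_of_locally_path_connected_space[OF lpcO] oO openin_trans_full
    unfolding PC_def by blast
  have DO: "D \<subseteq> Ow" unfolding D_def PC_def using path_component_of_subset_topspace by fastforce
  define E where "E = Ow - D"
  have Eeq: "E = (\<Union>y\<in>E. Collect (PC y))"
  proof
    show "E \<subseteq> (\<Union>y\<in>E. Collect (PC y))"
    proof
      fix y assume "y \<in> E"
      then have "PC y y" unfolding E_def PC_def using oO openin_subset by (auto simp: path_component_of_refl)
      then show "y \<in> (\<Union>y\<in>E. Collect (PC y))" using \<open>y \<in> E\<close> by blast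
    qed
  next
    show "(\<Union>y\<in>E. Collect (PC y)) \<subseteq> E"
    proof clarify
      fix y z assume "y \<in> E" "PC y z"
      then have "z \<in> Ow" unfolding PC_def using path_component_in_topspace by fastforce
      moreover have "z \<notin> D"
      proof
        assume "z \<in> D"
        then have "PC x0 z" unfolding D_def by simp
        with \<open>PC y z\<close> have "PC x0 y" unfolding PC_def by (meson path_component_of_sym path_component_of_trans)
        then show False using \<open>y \<in> E\<close> unfolding E_def D_def by simp
      qed
      ultimately show "z \<in> E" unfolding E_def by simp
    qed
  qed
  have oD: "openin X D" unfolding D_def using oPC by blast
  have oE: "openin X E"
    apply (subst Eeq)
    apply (rule openin_Union)
    using oPC by blast
  have ED: "E \<subseteq> Ow" unfolding E_def by blast
  have satE: "v \<in> E" if "u \<in> E" "v \<in> topspace X" "?p v = ?p u" for u v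
  proof -
    have uO: "u \<in> topspace X" using that(1) ED unfolding Ow_def by blast
    have "v \<notin> D"
    proof
      assume "v \<in> D"
      then have "u \<in> D" using sat[of v u] uO that(3) by simp
      then show False using that(1) unfolding E_def by blast
    qed
    moreover have "v \<in> Ow" using that ED unfolding Ow_def by auto
    ultimately show ?thesis unfolding E_def by blast
  qed
  have preD: "{x \<in> topspace X. ?p x \<in> ?p ` D} = D" using sat DO unfolding Ow_def by auto
  have preE: "{x \<in> topspace X. ?p x \<in> ?p ` E} = E" using satE ED unfolding Ow_def by auto
  have oS: "openin ?Y (?p ` D)" and oT: "openin ?Y (?p ` E)"
    unfolding collapse_space_def openin_quotient_topology preD preE
    using oD oE DO ED unfolding Ow_def by auto
  have con: "connectedin ?Y (h ` {0..1})"
    using connectedin_continuous_map_image[of "top_of_set {0..1}" ?Y h "{0..1}"] h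
    unfolding pathin_def by (simp add: connectedin_topspace[of "top_of_set {0..1}", simplified])
  show ?thesis
  proof (cases "x1 \<in> D")
    case True
    then have "PC x0 x1" unfolding D_def by simp
    then obtain g where "pathin (subtopology X Ow) g" "g 0 = x0" "g 1 = x1"
      unfolding PC_def path_component_of_def by blast
    then show ?thesis unfolding pathin_subtopology Ow_def by auto
  next
    case False
    then have x1E: "x1 \<in> E" using x1O unfolding E_def by blast
    have cov: "h ` {0..1} \<subseteq> ?p ` D \<union> ?p ` E"
    proof
      fix y assume "y \<in> h ` {0..1}"
      then have "y \<in> V" using hV by blast
      then obtain z where "z \<in> topspace X" "y = ?p z" using Vo by blast
      then have "z \<in> Ow" using \<open>y \<in> V\<close> unfolding Ow_def by auto
      then show "y \<in> ?p ` D \<union> ?p ` E" using \<open>y = ?p z\<close> unfolding E_def by blast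
    qed
    have dis: "?p ` D \<inter> ?p ` E \<inter> h ` {0..1} = {}"
    proof -
      have "False" if "u \<in> D" "v \<in> E" "?p u = ?p v" for u v
        using sat[of u v] that ED unfolding E_def Ow_def by auto
      then show ?thesis by blast
    qed
    have "h 0 \<in> ?p ` D" using h0 x0O unfolding D_def PC_def
      by (metis image_eqI mem_Collect_eq path_component_of_refl topspace_subtopology_subset oO openin_subset)
    moreover have "h 1 \<in> ?p ` E" using h1 x1E by (metis image_eqI)
    moreover have "h 0 \<in> h ` {0..1}" "h 1 \<in> h ` {0..1}" by auto
    ultimately have "?p ` D \<inter> h ` {0..1} \<noteq> {}" "?p ` E \<inter> h ` {0..1} \<noteq> {}" by blast+
    then show ?thesis using connectedinD[OF con oS oT cov dis] by blast
  qed
qed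

definition jn :: "(real \<Rightarrow> 'a) \<Rightarrow> (real \<Rightarrow> 'a) \<Rightarrow> real \<Rightarrow> 'a" where
  "jn g1 g2 = (\<lambda>x. if x \<le> 1/2 then (g1 \<circ> (\<lambda>t. 2 * t)) x else (g2 \<circ> (\<lambda>t. 2 * t -1)) x)"

lemma pathin_jn:
  assumes "pathin X g1" "pathin X g2" "g2 0 = g1 1"
  shows "pathin X (jn g1 g2)"
  unfolding pathin_def jn_def
proof -
  let ?T01 = "top_of_set {0..1::real}"
  have g1: "continuous_map ?T01 X g1" and g2: "continuous_map ?T01 X g2"
    using assms unfolding pathin_def by auto
    show "continuous_map (subtopology euclideanreal {0..1}) X (\<lambda>x. if x \<le> 1/2 then (g1 \<circ> (\<lambda>t. 2 * t)) x else (g2 \<circ> (\<lambda>t. 2 * t -1)) x)"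
    proof (intro continuous_map_cases_le continuous_map_compose, force, force)
      show "continuous_map (subtopology ?T01 {x \<in> topspace ?T01. x \<le> 1/2}) ?T01 ((*) 2)"
        by (auto simp: continuous_map_in_subtopology continuous_map_from_subtopology)
      have "continuous_map
             (subtopology (top_of_set {0..1}) {x. 0 \<le> x \<and> x \<le> 1 \<and> 1 \<le> x * 2})
             euclideanreal (\<lambda>t. 2 * t - 1)"
        by (intro continuous_intros) (force intro: continuous_map_from_subtopology)
      then show "continuous_map (subtopology ?T01 {x \<in> topspace ?T01. 1/2 \<le> x}) ?T01 (\<lambda>t. 2 * t - 1)"
        by (force simp: continuous_map_in_subtopology)
      show "(g1 \<circ> (*) 2) x = (g2 \<circ> (\<lambda>t. 2 * t - 1)) x" if "x \<in> topspace ?T01" "x = 1/2" for x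
        using that by (simp add: assms(3) mult.commute continuous_map_from_subtopology)
    qed (auto simp: g1 g2)
qed

lemma pathin_half1: "pathin X h \<Longrightarrow> pathin X (\<lambda>s. h (s/2))"
proof -
  assume "pathin X h"
  moreover have "continuous_map (top_of_set {0..1}) (top_of_set {0..1::real}) (\<lambda>s. s/2)"
    by (auto intro!: continuous_intros)
  ultimately show ?thesis unfolding pathin_def using continuous_map_compose[of _ "top_of_set {0..1::real}" "\<lambda>s. s/2" X h]
    by (simp add: o_def)
qed

lemma pathin_half2: "pathin X h \<Longrightarrow> pathin X (\<lambda>s. h ((s+1)/2))"
proof -
  assume "pathin X h"
  moreover have "continuous_map (top_of_set {0..1}) (top_of_set {0..1::real}) (\<lambda>s. (s+1)/2)"
    by (auto intro!: continuous_intros)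
  ultimately show ?thesis unfolding pathin_def using continuous_map_compose[of _ "top_of_set {0..1::real}" "\<lambda>s. (s+1)/2" X h]
    by (simp add: o_def)
qed

definition inI :: "nat \<Rightarrow> nat \<Rightarrow> real \<Rightarrow> bool" where
  "inI k j t \<longleftrightarrow> 0 \<le> t \<and> t \<le> 1 \<and> real j \<le> 2^k * t \<and> 2^k * t \<le> real j + 1"

lemma arL: "0 \<le> (t::real) \<Longrightarrow> t \<le> 1 \<Longrightarrow> r \<le> N*t \<Longrightarrow> N*t \<le> r + 1 \<Longrightarrow>
   0 \<le> t/2 \<and> t/2 \<le> 1 \<and> r \<le> (2*N)*(t/2) \<and> (2*N)*(t/2) \<le> r + 1"
  by auto

lemma arR: "0 \<le> (t::real) \<Longrightarrow> t \<le> 1 \<Longrightarrow> r \<le> N*t \<Longrightarrow> N*t \<le> r + 1 \<Longrightarrow>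
   0 \<le> (t+1)/2 \<and> (t+1)/2 \<le> 1 \<and> r + N \<le> (2*N)*((t+1)/2) \<and> (2*N)*((t+1)/2) \<le> r + N + 1"
  by (auto simp: algebra_simps)

lemma ar3: "0 \<le> (t::real) \<Longrightarrow> t \<le> 1/2 \<Longrightarrow> r \<le> (2*N)*t \<Longrightarrow> (2*N)*t \<le> r + 1 \<Longrightarrow>
   0 \<le> 2*t \<and> 2*t \<le> 1 \<and> r \<le> N*(2*t) \<and> N*(2*t) \<le> r + 1"
  by (auto simp: algebra_simps)

lemma ar4: "0 < (N::real) \<Longrightarrow> N \<le> r \<Longrightarrow> r \<le> (2*N)*t \<Longrightarrow> 1/2 \<le> t"
proof -
  assume a: "0 < N" "N \<le> r" "r \<le> (2*N)*t"
  have e: "(2*N)*t = N*(2*t)" by (simp add: mult_ac)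
  have "N * 1 \<le> N * (2*t)" using a e by linarith
  then have "1 \<le> 2*t" using a(1) mult_le_cancel_left_pos by blast
  then show ?thesis by simp
qed

lemma ar5: "0 < (N::real) \<Longrightarrow> r + 1 \<le> N \<Longrightarrow> (2*N)*t \<le> r + 1 \<Longrightarrow> t \<le> 1/2"
proof -
  assume a: "0 < N" "r + 1 \<le> N" "(2*N)*t \<le> r + 1"
  have e: "(2*N)*t = N*(2*t)" by (simp add: mult_ac)
  have "N * (2*t) \<le> N * 1" using a e by linarith
  then have "2*t \<le> 1" using a(1) mult_le_cancel_left_pos by blast
  then show ?thesis by simp
qed

lemma ar6: "1/2 \<le> (t::real) \<Longrightarrow> t \<le> 1 \<Longrightarrow> r + N \<le> (2*N)*t \<Longrightarrow> (2*N)*t \<le> r + N + 1 \<Longrightarrow>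
   0 \<le> 2*t - 1 \<and> 2*t - 1 \<le> 1 \<and> r \<le> N*(2*t - 1) \<and> N*(2*t - 1) \<le> r + 1"
  by (auto simp: algebra_simps)

lemma dyadic:
  assumes lpc: "locally_path_connected_space X" and pcA: "path_connectedin X A"
  shows "\<forall>h V x0 x1. pathin (collapse_space X A) h \<and>
     (\<forall>j<2^k. openin (collapse_space X A) (V j) \<and> (\<forall>t. inI k j t \<longrightarrow> h t \<in> V j)) \<and>
     x0 \<in> topspace X \<and> x1 \<in> topspace X \<and> collapse_map A x0 = h 0 \<and> collapse_map A x1 = h 1 \<longrightarrow>
     (\<exists>g. pathin X g \<and> g 0 = x0 \<and> g 1 = x1 \<and> (\<forall>j<2^k. \<forall>t. inI k j t \<longrightarrow> collapse_map A (g t) \<in> V j))"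
proof (induction k)
  case 0
  show ?case
  proof (intro allI impI, elim conjE)
    fix h V x0 x1
    assume h: "pathin (collapse_space X A) h"
      and hV: "\<forall>j<2^0. openin (collapse_space X A) (V j) \<and> (\<forall>t. inI 0 j t \<longrightarrow> h t \<in> V j)"
      and x: "x0 \<in> topspace X" "x1 \<in> topspace X" "collapse_map A x0 = h 0" "collapse_map A x1 = h 1"
    have "openin (collapse_space X A) (V 0)" "h ` {0..1} \<subseteq> V 0"
      using hV unfolding inI_def by auto
    from comp_path[OF lpc pcA this(1) h this(2) x]
    obtain g where "pathin X g" "g 0 = x0" "g 1 = x1" "\<forall>t\<in>{0..1}. collapse_map A (g t) \<in> V 0"
      by blast
    then show "\<exists>g. pathin X g \<and> g 0 = x0 \<and> g 1 = x1 \<and> (\<forall>j<2^0. \<forall>t. inI 0 j t \<longrightarrow> collapse_map A (g t) \<in> V j)"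
      unfolding inI_def by auto
  qed
next
  case (Suc k)
  show ?case
  proof (intro allI impI, elim conjE)
    fix h V x0 x1
    let ?Y = "collapse_space X A"
    let ?p = "collapse_map A"
    assume h: "pathin ?Y h"
      and hV: "\<forall>j<2^Suc k. openin ?Y (V j) \<and> (\<forall>t. inI (Suc k) j t \<longrightarrow> h t \<in> V j)"
      and x: "x0 \<in> topspace X" "x1 \<in> topspace X" "?p x0 = h 0" "?p x1 = h 1"
    have "h (1/2) \<in> topspace ?Y" using h unfolding pathin_def continuous_map_def by auto
    then obtain xm where xm: "xm \<in> topspace X" "?p xm = h (1/2)"
      unfolding collapse_space_def topspace_quotient_topology by auto
    have hL: "pathin ?Y (\<lambda>s. h (s/2))" and hR: "pathin ?Y (\<lambda>s. h ((s+1)/2))"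
      using h pathin_half1 pathin_half2 by auto
    have VL: "\<forall>j<2^k. openin ?Y (V j) \<and> (\<forall>t. inI k j t \<longrightarrow> h (t/2) \<in> V j)"
    proof (intro allI impI conjI)
      fix j t assume j: "j < (2::nat)^k"
      then show "openin ?Y (V j)" using hV by simp
      assume "inI k j t"
      then have "inI (Suc k) j (t/2)" using arL[of t "real j" "2^k"] unfolding inI_def power_Suc by blast
      then show "h (t/2) \<in> V j" using hV j by simp
    qed
    have VR: "\<forall>j<2^k. openin ?Y (V (j+2^k)) \<and> (\<forall>t. inI k j t \<longrightarrow> h ((t+1)/2) \<in> V (j+2^k))"
    proof (intro allI impI conjI)
      fix j t assume j: "j < (2::nat)^k"
      then show "openin ?Y (V (j+2^k))" using hV by simp
      assume "inI k j t"
      then have "inI (Suc k) (j+2^k) ((t+1)/2)" using arR[of t "real j" "2^k"]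
        unfolding inI_def power_Suc of_nat_add of_nat_power of_nat_numeral by blast
      then show "h ((t+1)/2) \<in> V (j+2^k)" using hV j by simp
    qed
    have hs: "h (0/2) = h 0" "h ((0+1)/2) = h (1/2)" "h ((1+1)/2) = h 1" "h (1/2) = h (1/2)" by simp_all
    obtain gL where gL: "pathin X gL" "gL 0 = x0" "gL 1 = xm"
      "\<forall>j<2^k. \<forall>t. inI k j t \<longrightarrow> ?p (gL t) \<in> V j"
      using Suc.IH[rule_format, of "\<lambda>s. h (s/2)" V x0 xm, OF conjI[OF hL conjI[OF VL]]] x xm hs by auto
    obtain gR where gR: "pathin X gR" "gR 0 = xm" "gR 1 = x1"
      "\<forall>j<2^k. \<forall>t. inI k j t \<longrightarrow> ?p (gR t) \<in> V (j+2^k)"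
      using Suc.IH[rule_format, of "\<lambda>s. h ((s+1)/2)" "\<lambda>j. V (j+2^k)" xm x1, OF conjI[OF hR conjI[OF VR]]] x xm hs by auto
    have P: "pathin X (jn gL gR)" using pathin_jn gL gR by auto
    have "\<forall>j<2^Suc k. \<forall>t. inI (Suc k) j t \<longrightarrow> ?p (jn gL gR t) \<in> V j"
    proof (intro allI impI)
      fix j t assume j: "j < (2::nat)^Suc k" and t: "inI (Suc k) j t"
      show "?p (jn gL gR t) \<in> V j"
      proof (cases "t \<le> 1/2")
        case True
        show ?thesis
        proof (cases "j < 2^k")
          case True
          have "inI k j (2*t)" using t \<open>t \<le> 1/2\<close> ar3[of t "real j" "2^k"] unfolding inI_def power_Suc by blast
          then have "?p (gL (2*t)) \<in> V j" using gL(4) True by blast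
          moreover have "jn gL gR t = gL (2*t)" unfolding jn_def using \<open>t \<le> 1/2\<close> by simp
          ultimately show ?thesis by simp
        next
          case False
          then have "(2::real)^k \<le> real j" by (metis not_less of_nat_le_iff of_nat_numeral of_nat_power)
          then have "1/2 \<le> t" using t ar4[of "2^k" "real j" t] unfolding inI_def power_Suc by simp
          then have "t = 1/2" using True by linarith
          have "h t \<in> V j" using hV j t by blast
          moreover have "jn gL gR t = xm" unfolding \<open>t = 1/2\<close> jn_def using gL(3) by simp
          moreover have "?p xm = h t" unfolding \<open>t = 1/2\<close> using xm(2) .
          ultimately show ?thesis by simp
        qed
      next
        case False
        have "\<not> j < 2^k"
        proof
          assume "j < 2^k"
          then have "real j + 1 \<le> 2^k"
            by (metis Suc_leI of_nat_Suc of_nat_le_iff of_nat_numeral of_nat_power add.commute)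
          then show False using t False ar5[of "2^k" "real j" t] unfolding inI_def power_Suc by simp
        qed
        define i where "i = j - 2^k"
        have i: "j = i + 2^k" "i < 2^k" using j \<open>\<not> j < 2^k\<close> unfolding i_def power_Suc by auto
        have rj: "real j = real i + 2^k" using i by simp
        have "1/2 \<le> t" using False by simp
        then have "inI k i (2*t - 1)" using t ar6[of t "real i" "2^k"] unfolding inI_def power_Suc rj by blast
        then have "?p (gR (2*t - 1)) \<in> V (i + 2^k)" using gR(4) i(2) by blast
        moreover have "jn gL gR t = gR (2*t - 1)" unfolding jn_def using False by simp
        ultimately show ?thesis using i(1) by simp
      qed
    qed
    then show "\<exists>g. pathin X g \<and> g 0 = x0 \<and> g 1 = x1 \<and> (\<forall>j<2^Suc k. \<forall>t. inI (Suc k) j t \<longrightarrow> ?p (g t) \<in> V j)"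
      using P gL gR by (intro exI[of _ "jn gL gR"]) (simp add: jn_def)
  qed
qed

lemma gen_basis:
  assumes "generate_topology_on S P"
  shows "h \<in> P \<Longrightarrow> \<exists>F. finite F \<and> F \<subseteq> S \<and> F \<noteq> {} \<and> h \<in> \<Inter>F \<and> \<Inter>F \<subseteq> P"
  using assms
proof (induction arbitrary: h rule: generate_topology_on.induct)
  case Empty then show ?case by simp
next
  case (Int a b)
  have ha: "h \<in> a" and hb: "h \<in> b" using Int.prems by auto
  obtain F1 where F1: "finite F1" "F1 \<subseteq> S" "F1 \<noteq> {}" "h \<in> \<Inter>F1" "\<Inter>F1 \<subseteq> a"
    using Int.IH(1)[OF ha] by blast
  obtain F2 where F2: "finite F2" "F2 \<subseteq> S" "F2 \<noteq> {}" "h \<in> \<Inter>F2" "\<Inter>F2 \<subseteq> b"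
    using Int.IH(2)[OF hb] by blast
  have 1: "finite (F1 \<union> F2)" using F1 F2 by simp
  have 2: "F1 \<union> F2 \<subseteq> S" using F1 F2 by simp
  have 3: "F1 \<union> F2 \<noteq> {}" using F1 by simp
  have 4: "h \<in> \<Inter>(F1 \<union> F2)" using F1(4) F2(4) by blast
  have 5: "\<Inter>(F1 \<union> F2) \<subseteq> a \<inter> b" using F1(5) F2(5) by auto
  show ?case by (rule exI[of _ "F1 \<union> F2"]) (intro conjI 1 2 3 4 5)
next
  case (UN K)
  obtain k where k: "k \<in> K" "h \<in> k" using UN.prems by blast
  obtain F where F: "finite F" "F \<subseteq> S" "F \<noteq> {}" "h \<in> \<Inter>F" "\<Inter>F \<subseteq> k"
    using UN.IH[OF k] by blast
  have 5: "\<Inter>F \<subseteq> \<Union>K" using F(5) k(1) by blast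
  show ?case by (rule exI[of _ F]) (intro conjI F(1-4) 5)
next
  case (Basis s)
  have "finite {s}" "{s} \<subseteq> S" "{s} \<noteq> {}" "h \<in> \<Inter>{s}" "\<Inter>{s} \<subseteq> s" using Basis by simp_all
  then show ?case by (intro exI[of _ "{s}"] conjI)
qed

lemma ex_inI: "t \<in> {0..1} \<Longrightarrow> \<exists>j<2^k. inI k j t"
proof -
  assume t: "t \<in> {0..1}"
  show ?thesis
  proof (cases "t = 1")
    case True
    have "(1::nat) \<le> 2^k" by simp
    then have r: "real (2^k - 1) = 2^k - 1" by (simp add: of_nat_diff)
    have "inI k (2^k-1) t" unfolding inI_def using True r by simp
    moreover have "2^k - 1 < (2::nat)^k" by simp
    ultimately show ?thesis by blast
  next
    case False
    define j where "j = nat \<lfloor>2^k * t\<rfloor>"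
    have nn: "0 \<le> 2^k * t" using t by simp
    then have rj: "real j = of_int \<lfloor>2^k * t\<rfloor>" unfolding j_def by simp
    have "2^k * t < 2^k * 1" using t False by simp
    then have "real j < 2^k" using rj by linarith
    then have "j < 2^k" by (metis of_nat_less_iff of_nat_numeral of_nat_power)
    moreover have "inI k j t" unfolding inI_def using t rj
      of_int_floor_le[of "2^k * t"] real_of_int_floor_add_one_gt[of "2^k*t"] by auto
    ultimately show ?thesis by blast
  qed
qed

lemma inI_close:
  assumes "inI k j s" "inI k j t" shows "\<bar>s - t\<bar> \<le> (1/2)^k"
proof -
  have "\<bar>2^k * s - 2^k * t\<bar> \<le> 1" using assms unfolding inI_def by linarith
  then have "2^k * \<bar>s - t\<bar> \<le> 1" by (simp add: abs_mult flip: right_diff_distrib)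
  then show ?thesis by (simp add: power_one_over pos_le_divide_eq mult.commute)
qed

lemma approx:
  assumes lpc: "locally_path_connected_space X" and pcA: "path_connectedin X A" and aA: "a \<in> A"
    and h: "h \<in> loops (collapse_space X A) (collapse_map A a)"
    and F: "finite F" "F \<noteq> {}"
    "F \<subseteq> {{g \<in> loops (collapse_space X A) (collapse_map A a). g ` K \<subseteq> U} | K U.
            compactin (top_of_set {0..1}) K \<and> openin (collapse_space X A) U}"
    and hF: "h \<in> \<Inter>F"
  shows "\<exists>g\<in>loops X a. collapse_map A \<circ> g \<in> \<Inter>F"
proof -
  let ?Y = "collapse_space X A"
  let ?p = "collapse_map A"
  let ?y = "?p a"
  have "\<forall>f\<in>F. \<exists>KU. f = {g \<in> loops ?Y ?y. g ` fst KU \<subseteq> snd KU} \<and>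
            compactin (top_of_set {0..1}) (fst KU) \<and> openin ?Y (snd KU)"
  proof
    fix f assume "f \<in> F"
    then have "f \<in> {{g \<in> loops ?Y ?y. g ` K \<subseteq> U} | K U.
            compactin (top_of_set {0..1}) K \<and> openin ?Y U}" using F(3) by (rule subsetD[rotated])
    then obtain K U where "f = {g \<in> loops ?Y ?y. g ` K \<subseteq> U}" "compactin (top_of_set {0..1}) K" "openin ?Y U"
      by blast
    then show "\<exists>KU. f = {g \<in> loops ?Y ?y. g ` fst KU \<subseteq> snd KU} \<and>
            compactin (top_of_set {0..1}) (fst KU) \<and> openin ?Y (snd KU)"
      by (intro exI[of _ "(K, U)"]) simp
  qed
  from bchoice[OF this] obtain KU where KU': "\<forall>f\<in>F. f = {g \<in> loops ?Y ?y. g ` fst (KU f) \<subseteq> snd (KU f)} \<and>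
            compactin (top_of_set {0..1}) (fst (KU f)) \<and> openin ?Y (snd (KU f))"
    ..
  have KU: "f = {g \<in> loops ?Y ?y. g ` fst (KU f) \<subseteq> snd (KU f)} \<and>
            compactin (top_of_set {0..1}) (fst (KU f)) \<and> openin ?Y (snd (KU f))" if "f \<in> F" for f
    using KU' that by (rule bspec)
  define K where "K f = fst (KU f)" for f
  define U where "U f = snd (KU f)" for f
  have fe: "f = {g \<in> loops ?Y ?y. g ` K f \<subseteq> U f}" and cK: "compact (K f)" and K01: "K f \<subseteq> {0..1}"
    and oU: "openin ?Y (U f)" if "f \<in> F" for f
  proof -
    have 1: "f = {g \<in> loops ?Y ?y. g ` K f \<subseteq> U f}" using conjunct1[OF KU[OF that]] unfolding K_def U_def .
    have 2: "compactin (top_of_set {0..1}) (K f)" using conjunct1[OF conjunct2[OF KU[OF that]]] unfolding K_def .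
    have 3: "openin ?Y (U f)" using conjunct2[OF conjunct2[OF KU[OF that]]] unfolding U_def .
    from 2 have "compact (K f)" "K f \<subseteq> {0..1}" unfolding compactin_subtopology by simp_all
    with 1 3 show "f = {g \<in> loops ?Y ?y. g ` K f \<subseteq> U f}" "compact (K f)" "K f \<subseteq> {0..1}" "openin ?Y (U f)"
      by simp_all
  qed
  have ph: "pathin ?Y h" and h0: "h 0 = ?y" and h1: "h 1 = ?y" using h unfolding loops_def by auto
  have hcont: "continuous_map (top_of_set {0..1}) ?Y h" using ph unfolding pathin_def by simp
  have "\<exists>d>0. \<forall>s\<in>{0..1}. (\<exists>t\<in>K f. \<bar>s - t\<bar> < d) \<longrightarrow> h s \<in> U f" if f: "f \<in> F" for f
  proof -
    have hK: "h ` K f \<subseteq> U f" using hF f fe by blast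
    have "openin (top_of_set {0..1}) {s \<in> topspace (top_of_set {0..1}). h s \<in> U f}"
      using openin_continuous_map_preimage[OF hcont oU[OF f]] .
    then obtain G where G: "open G" "{s \<in> {0..1}. h s \<in> U f} = {0..1} \<inter> G"
      by (auto simp: openin_open)
    have "K f \<subseteq> G" using G(2) hK K01[OF f] by blast
    then obtain e where e: "e > 0" "(\<Union>x\<in>K f. ball x e) \<subseteq> G"
      using compact_subset_open_imp_ball_epsilon_subset[OF cK[OF f] G(1)] by blast
    show ?thesis
    proof (intro exI[of _ e] conjI ballI impI e(1))
      fix s assume s: "s \<in> {0..1}" and "\<exists>t\<in>K f. \<bar>s - t\<bar> < e"
      then obtain t where "t \<in> K f" "\<bar>s - t\<bar> < e" by blast
      then have "s \<in> G" using e(2) by (force simp: dist_real_def abs_minus_commute)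
      then show "h s \<in> U f" using s G(2) by blast
    qed
  qed
  then obtain d where d: "\<And>f. f \<in> F \<Longrightarrow> d f > 0"
    "\<And>f s. f \<in> F \<Longrightarrow> s \<in> {0..1} \<Longrightarrow> (\<exists>t\<in>K f. \<bar>s - t\<bar> < d f) \<Longrightarrow> h s \<in> U f"
    by metis
  define \<delta> where "\<delta> = Min (d ` F)"
  have \<delta>0: "\<delta> > 0" unfolding \<delta>_def using F d(1) by auto
  have \<delta>le: "\<delta> \<le> d f" if "f \<in> F" for f unfolding \<delta>_def using F that by auto
  obtain k where k: "(1/2::real)^k < \<delta>" using real_arch_pow_inv[OF \<delta>0, of "1/2"] by auto
  define V where "V j = \<Inter>(insert (topspace ?Y) (U ` {f \<in> F. \<exists>t\<in>K f. inI k j t}))" for j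
  have oV: "openin ?Y (V j)" for j
    unfolding V_def using F oU by (intro openin_Inter) auto
  have hV: "h t \<in> V j" if "inI k j t" for j t
  proof -
    have t01: "t \<in> {0..1}" using that unfolding inI_def by auto
    have "h t \<in> topspace ?Y" using hcont t01 unfolding continuous_map_def by auto
    moreover have "h t \<in> U f" if f: "f \<in> F" and t': "t' \<in> K f" "inI k j t'" for f t'
    proof -
      have "\<bar>t - t'\<bar> < d f" using inI_close[OF \<open>inI k j t\<close> t'(2)] k \<delta>le[OF f] by linarith
      then show ?thesis using d(2)[OF f t01] t' by blast
    qed
    ultimately show ?thesis unfolding V_def by blast
  qed
  have aX: "a \<in> topspace X" using pcA aA path_connectedin_subset_topspace by blast
  obtain g where g: "pathin X g" "g 0 = a" "g 1 = a" "\<forall>j<2^k. \<forall>t. inI k j t \<longrightarrow> ?p (g t) \<in> V j"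
    using dyadic[OF lpc pcA, of k, rule_format, of h V a a] ph oV hV aX h0 h1 by auto
  have gl: "g \<in> loops X a" unfolding loops_def using g by auto
  have pg: "?p \<circ> g \<in> loops ?Y ?y" unfolding loops_def collapse_space_def
    using g pathin_compose[OF g(1) continuous_map_quotient] by auto
  have "?p \<circ> g \<in> f" if f: "f \<in> F" for f
  proof -
    have "(?p \<circ> g) ` K f \<subseteq> U f"
    proof
      fix z assume "z \<in> (?p \<circ> g) ` K f"
      then obtain t where t: "t \<in> K f" "z = ?p (g t)" by auto
      then obtain j where j: "j < 2^k" "inI k j t" using ex_inI K01[OF f] by blast
      then have "?p (g t) \<in> V j" using g(4) by blast
      moreover have "U f \<in> U ` {f \<in> F. \<exists>t\<in>K f. inI k j t}" using f t j by blast
      ultimately show "z \<in> U f" using t unfolding V_def by blast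
    qed
    then show ?thesis using fe[OF f] pg by blast
  qed
  then show ?thesis using gl by blast
qed

theorem theorem3p11:
  fixes X :: "'a topology" and A :: "'a set" and a :: 'a
  assumes "locally_path_connected_space X"
    and "closedin X A"
    and "path_connectedin X A"
    and "\<forall>x\<in>A. countable_local_base_at X x"
    and "a \<in> A"
  shows "(pi1_top (collapse_space X A) (collapse_map A a)) closure_of
           ((\<lambda>g. loop_class (collapse_space X A) (collapse_map A a) (collapse_map A \<circ> g))
              ` loops X a)
         = topspace (pi1_top (collapse_space X A) (collapse_map A a))"
proof -
  define Y where "Y = collapse_space X A"
  define y where "y = collapse_map A a"
  define S where "S = {{g \<in> loops Y y. g ` K \<subseteq> U} | K U.
            compactin (top_of_set {0..1}) K \<and> openin Y U}"
  have LS: "loop_space_top Y y = topology_generated_by S" unfolding loop_space_top_def S_def by simp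
  have US: "\<Union>S = loops Y y"
  proof
    show "\<Union>S \<subseteq> loops Y y"
    proof (rule Union_least)
      fix s assume "s \<in> S"
      then obtain K U where "s = {g \<in> loops Y y. g ` K \<subseteq> U}" unfolding S_def by blast
      then show "s \<subseteq> loops Y y" by blast
    qed
    have "{g \<in> loops Y y. g ` {} \<subseteq> topspace Y} \<in> S" unfolding S_def
      by (intro CollectI exI[of _ "{}"] exI[of _ "topspace Y"]) simp
    moreover have "{g \<in> loops Y y. g ` {} \<subseteq> topspace Y} = loops Y y" by simp
    ultimately show "loops Y y \<subseteq> \<Union>S" by (metis Union_upper)
  qed
  have tsLS: "topspace (loop_space_top Y y) = loops Y y" unfolding LS US[symmetric]
    by (rule topology_generated_by_topspace)
  have "topspace (pi1_top Y y) \<subseteq> pi1_top Y y closure_of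
           ((\<lambda>g. loop_class Y y (collapse_map A \<circ> g)) ` loops X a)"
  proof
    fix c assume c: "c \<in> topspace (pi1_top Y y)"
    then obtain h where h: "h \<in> loops Y y" "c = loop_class Y y h"
      unfolding pi1_top_def topspace_quotient_topology tsLS by blast
    show "c \<in> pi1_top Y y closure_of
           ((\<lambda>g. loop_class Y y (collapse_map A \<circ> g)) ` loops X a)"
      unfolding in_closure_of
    proof (intro conjI c allI impI, elim conjE)
      fix T assume cT: "c \<in> T" and oT: "openin (pi1_top Y y) T"
      define P where "P = {g \<in> topspace (loop_space_top Y y). loop_class Y y g \<in> T}"
      have "openin (loop_space_top Y y) P" using oT unfolding P_def pi1_top_def openin_quotient_topology
        by (rule conjunct2)
      then have gP: "generate_topology_on S P" unfolding LS by (rule openin_topology_generated_by)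
      have hP: "h \<in> P" unfolding P_def tsLS using h cT by simp
      obtain F where F: "finite F" "F \<subseteq> S" "F \<noteq> {}" "h \<in> \<Inter>F" "\<Inter>F \<subseteq> P"
        using gen_basis[OF gP hP] by blast
      obtain g where g: "g \<in> loops X a" "collapse_map A \<circ> g \<in> \<Inter>F"
        using approx[OF assms(1) assms(3) assms(5) h(1)[unfolded Y_def y_def] F(1) F(3)
            F(2)[unfolded S_def Y_def y_def] F(4)] by blast
      have "collapse_map A \<circ> g \<in> P" using g(2) F(5) by (rule subsetD[rotated])
      then have "loop_class Y y (collapse_map A \<circ> g) \<in> T" unfolding P_def by simp
      then show "\<exists>z. z \<in> (\<lambda>g. loop_class Y y (collapse_map A \<circ> g)) ` loops X a \<and> z \<in> T"
        using g(1) by blast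
    qed
  qed
  then show ?thesis unfolding Y_def[symmetric] y_def[symmetric]
    by (rule antisym[OF closure_of_subset_topspace])
qed

end
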